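(* Let $\mathbf{A}_C\in\{0,1\}^{U\times N}$, $\mathcal{E}=\{(i,j): [\mathbf{A}_C]_{ij}=1\}$, $\mathbf{B}=\mathbf{A}_C^T\mathbf{A}_C$, and let $\mathbf{u}$ be a unit-norm eigenvector of $\mathbf{B}$ with nonnegative entries associated with $\lambda_{\max}(\mathbf{B})$. For $\mathcal{E}_{\mathcal{R}}\subseteq\mathcal{E}$ define $$f(\mathcal{E}_{\mathcal{R}})=2\sum_{(i,j)\in\mathcal{E}_{\mathcal{R}}}\mathbf{u}^T\mathbf{A}_C^T\mathbf{e}^U_i[\mathbf{u}]_j-\sum_{i=1}^{U}\ \sum_{j:(i,j)\in\mathcal{E}_{\mathcal{R}}}\ \sum_{s:(i,s)\in\mathcal{E}_{\mathcal{R}}}[\mathbf{u}]_j[\mathbf{u}]_s .$$ Then $f$ is a monotone (nondecreasing) submodular set function on subsets of $\mathcal{E}$; that is, for all $\mathcal{E}_{\mathcal{R}1}\subseteq\mathcal{E}_{\mathcal{R}2}\subseteq\mathcal{E}$ we have $f(\mathcal{E}_{\mathcal{R}2})\ge f(\mathcal{E}_{\mathcal{R}1})$, and for every $e\in\mathcal{E}\setminus\mathcal{E}_{\mathcal{R}2}$, $$f(\mathcal{E}_{\mathcal{R}2}\cup\{e\})-f(\mathcal{E}_{\mathcal{R}2})\le f(\mathcal{E}_{\mathcal{R}1}\cup\{e\})-f(\mathcal{E}_{\mathcal{R}1}).$$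
   Context: $\mathbf{A}_C$ is the adjacency matrix of a bipartite user–host access graph with $U$ users and $N$ hosts; $\mathcal{E}$ is its edge set. $\mathbf{e}^U_i$ is the $U\times1$ canonical basis vector with $1$ in position $i$. $\lambda_{\max}(\mathbf{B})$ is the largest eigenvalue of $\mathbf{B}$; $[\mathbf{u}]_j$ is the $j$-th entry of $\mathbf{u}$. *)

theory Defs
  imports "HOL-Analysis.Analysis"
begin

text \<open>Users are indexed by the finite type 'u (U = CARD('u)), hosts by 'n (N = CARD('n)).
  The access matrix A_C is a real U x N matrix with 0/1 entries.\<close>

definition edge_set :: "real^'n^'u \<Rightarrow> ('u \<times> 'n) set" where
  "edge_set A = {(i, j). A $ i $ j = 1}"

definition is_eigenvalue :: "real^'n^'n \<Rightarrow> real \<Rightarrow> bool" where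
  "is_eigenvalue B l \<longleftrightarrow> (\<exists>v. v \<noteq> 0 \<and> B *v v = l *\<^sub>R v)"

text \<open>Largest eigenvalue (B = A^T A is symmetric, so all eigenvalues are real).\<close>
definition lambda_max :: "real^'n^'n \<Rightarrow> real" where
  "lambda_max B = Max {l. is_eigenvalue B l}"

definition basis_vec :: "'u::finite \<Rightarrow> real^'u" where
  "basis_vec i = axis i 1"

definition f_obj :: "real^'n^'u \<Rightarrow> real^'n \<Rightarrow> ('u \<times> 'n) set \<Rightarrow> real" where
  "f_obj A u ER =
     2 * (\<Sum>(i, j)\<in>ER. (u \<bullet> (transpose A *v basis_vec i)) * u $ j)
     - (\<Sum>i\<in>UNIV. \<Sum>j\<in>{j. (i, j) \<in> ER}. \<Sum>s\<in>{s. (i, s) \<in> ER}. u $ j * u $ s)"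

end

theory Submission
  imports Defs
begin

definition SS :: "real^'n \<Rightarrow> ('u \<times> 'n) set \<Rightarrow> 'u \<Rightarrow> real" where
  "SS u E i = (\<Sum>j\<in>{j. (i, j) \<in> E}. u $ j)"

lemma f_decomp:
  fixes A :: "real^'n^'u::finite" and u :: "real^'n::finite"
  shows "f_obj A u E = (\<Sum>i\<in>UNIV. 2 * (u \<bullet> (transpose A *v basis_vec i)) * SS u E i - (SS u E i)^2)"
proof -
  have E: "E = Sigma UNIV (\<lambda>i. {j. (i, j) \<in> E})" by auto
  have 1: "(\<Sum>(i, j)\<in>E. (u \<bullet> (transpose A *v basis_vec i)) * u $ j)
     = (\<Sum>i\<in>UNIV. \<Sum>j\<in>{j. (i, j) \<in> E}. (u \<bullet> (transpose A *v basis_vec i)) * u $ j)"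
    by (subst E, subst sum.Sigma[symmetric]) auto
  have 2: "\<And>i. (\<Sum>j\<in>{j. (i, j) \<in> E}. \<Sum>s\<in>{s. (i, s) \<in> E}. u $ j * u $ s) = (SS u E i)^2"
    by (simp add: SS_def power2_eq_square sum_product)
  show ?thesis unfolding f_obj_def 1 2
    by (simp add: SS_def sum_distrib_left sum_subtractf sum_distrib_right mult.assoc)
qed

lemma a_eq:
  fixes A :: "real^'n^'u::finite" and u :: "real^'n::finite"
  shows "u \<bullet> (transpose A *v basis_vec i) = (\<Sum>j\<in>UNIV. A $ i $ j * u $ j)"
proof -
  have "transpose A *v basis_vec i = A $ i"
    by (simp add: vec_eq_iff matrix_vector_mult_def transpose_def basis_vec_def axis_def
        if_distrib cong: if_cong)
  then show ?thesis by (simp add: inner_vec_def mult.commute)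
qed

lemma SS_le:
  fixes A :: "real^'n^'u::finite" and u :: "real^'n::finite"
  assumes A01: "\<forall>i j. A $ i $ j \<in> {0, 1}" and nonneg: "\<forall>j. u $ j \<ge> 0"
    and E: "E \<subseteq> edge_set A"
  shows "SS u E i \<le> u \<bullet> (transpose A *v basis_vec i)"
proof -
  have "SS u E i = (\<Sum>j\<in>{j. (i, j) \<in> E}. A $ i $ j * u $ j)"
    unfolding SS_def using E by (intro sum.cong) (auto simp: edge_set_def)
  also have "\<dots> \<le> (\<Sum>j\<in>UNIV. A $ i $ j * u $ j)"
  proof (rule sum_mono2)
    fix j
    have "A $ i $ j \<ge> 0" using A01 by (metis empty_iff insert_iff order_refl zero_le_one)
    then show "0 \<le> A $ i $ j * u $ j" using nonneg by simp
  qed auto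
  finally show ?thesis using a_eq[of u A i] by simp
qed

lemma SS_mono: assumes "E1 \<subseteq> E2" "\<forall>j. u $ j \<ge> 0"
  shows "SS u E1 i \<le> SS u E2 i"
  unfolding SS_def using assms by (intro sum_mono2) auto

lemma SS_ins: assumes "(k, l) \<notin> E"
  shows "SS u (E \<union> {(k, l)}) i = SS u E i + (if i = k then u $ l else 0)"
proof (cases "i = k")
  case True
  then have "{j. (i, j) \<in> E \<union> {(k, l)}} = insert l {j. (i, j) \<in> E}" by auto
  moreover have "l \<notin> {j. (i, j) \<in> E}" using assms True by auto
  ultimately show ?thesis using True by (simp add: SS_def)
next
  case False
  then have "{j. (i, j) \<in> E \<union> {(k, l)}} = {j. (i, j) \<in> E}" by auto
  then show ?thesis using False by (simp add: SS_def)
qed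

lemma g_mono: fixes a x y :: real assumes "0 \<le> x" "x \<le> y" "y \<le> a"
  shows "2 * a * x - x^2 \<le> 2 * a * y - y^2"
proof -
  have "(2 * a * y - y^2) - (2 * a * x - x^2) = (y - x) * (2*a - x - y)"
    by (simp add: algebra_simps power2_eq_square)
  also have "\<dots> \<ge> 0" using assms by (intro mult_nonneg_nonneg) auto
  finally show ?thesis by simp
qed

lemma g_sub: fixes a x y c :: real assumes "x \<le> y" "0 \<le> c"
  shows "(2 * a * (y + c) - (y + c)^2) - (2 * a * y - y^2) \<le> (2 * a * (x + c) - (x + c)^2) - (2 * a * x - x^2)"
proof -
  have "((2 * a * (x + c) - (x + c)^2) - (2 * a * x - x^2)) - ((2 * a * (y + c) - (y + c)^2) - (2 * a * y - y^2))
     = 2 * c * (y - x)" by (simp add: algebra_simps power2_eq_square)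
  also have "\<dots> \<ge> 0" using assms by auto
  finally show ?thesis by simp
qed

theorem theorem1:
  fixes A :: "real^'n^'u" and u :: "real^'n"
  assumes A01: "\<forall>i j. A $ i $ j \<in> {0, 1}"
    and unit: "norm u = 1"
    and nonneg: "\<forall>j. u $ j \<ge> 0"
    and eig: "(transpose A ** A) *v u = lambda_max (transpose A ** A) *\<^sub>R u"
  shows "(\<forall>E1 E2. E1 \<subseteq> E2 \<and> E2 \<subseteq> edge_set A \<longrightarrow> f_obj A u E2 \<ge> f_obj A u E1)
       \<and> (\<forall>E1 E2 e. E1 \<subseteq> E2 \<and> E2 \<subseteq> edge_set A \<and> e \<in> edge_set A - E2 \<longrightarrow>
            f_obj A u (E2 \<union> {e}) - f_obj A u E2 \<le> f_obj A u (E1 \<union> {e}) - f_obj A u E1)"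
proof (intro conjI allI impI)
  fix E1 E2 :: "('u \<times> 'n) set"
  assume h: "E1 \<subseteq> E2 \<and> E2 \<subseteq> edge_set A"
  show "f_obj A u E2 \<ge> f_obj A u E1"
    unfolding f_decomp
  proof (rule sum_mono)
    fix i
    have "0 \<le> SS u E1 i" unfolding SS_def using nonneg by (intro sum_nonneg) auto
    moreover have "SS u E1 i \<le> SS u E2 i" using h nonneg by (intro SS_mono) auto
    moreover have "SS u E2 i \<le> u \<bullet> (transpose A *v basis_vec i)"
      using h by (intro SS_le[OF A01 nonneg]) auto
    ultimately show "2 * (u \<bullet> (transpose A *v basis_vec i)) * SS u E1 i - (SS u E1 i)\<^sup>2
       \<le> 2 * (u \<bullet> (transpose A *v basis_vec i)) * SS u E2 i - (SS u E2 i)\<^sup>2"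
      by (rule g_mono)
  qed
next
  fix E1 E2 :: "('u \<times> 'n) set" and e
  assume h: "E1 \<subseteq> E2 \<and> E2 \<subseteq> edge_set A \<and> e \<in> edge_set A - E2"
  obtain k l where e: "e = (k, l)" by (cases e)
  have n2: "(k, l) \<notin> E2" and n1: "(k, l) \<notin> E1" using h e by auto
  define a where "a = (\<lambda>i. u \<bullet> (transpose A *v basis_vec i))"
  define c where "c = (\<lambda>i. if i = k then u $ l else (0::real))"
  define g where "g = (\<lambda>i x. 2 * a i * x - (x::real)^2)"
  have fE: "\<And>E. f_obj A u E = (\<Sum>i\<in>UNIV. g i (SS u E i))"
    unfolding g_def a_def by (rule f_decomp)
  have d: "\<And>E. (k, l) \<notin> E \<Longrightarrow> f_obj A u (E \<union> {e}) - f_obj A u E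
      = (\<Sum>i\<in>UNIV. g i (SS u E i + c i) - g i (SS u E i))"
  proof -
    fix E :: "('u \<times> 'n) set" assume kl: "(k, l) \<notin> E"
    have "\<And>i. SS u (E \<union> {e}) i = SS u E i + c i" unfolding e c_def by (rule SS_ins[OF kl])
    then show "f_obj A u (E \<union> {e}) - f_obj A u E
      = (\<Sum>i\<in>UNIV. g i (SS u E i + c i) - g i (SS u E i))"
      by (simp only: fE sum_subtractf)
  qed
  show "f_obj A u (E2 \<union> {e}) - f_obj A u E2 \<le> f_obj A u (E1 \<union> {e}) - f_obj A u E1"
    unfolding d[OF n1] d[OF n2]
  proof (rule sum_mono)
    fix i
    have "SS u E1 i \<le> SS u E2 i" using h nonneg by (intro SS_mono) auto
    moreover have "0 \<le> c i" using nonneg by (simp add: c_def)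
    ultimately show "g i (SS u E2 i + c i) - g i (SS u E2 i) \<le> g i (SS u E1 i + c i) - g i (SS u E1 i)"
      unfolding g_def by (rule g_sub)
  qed
qed

end
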